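(* Assume $\ker(K)\cap\ker(D)=\{0\}$ and fix $\delta\ge0$ and data $y^\delta$. Let $\{\Psi_k\}_{k\in\mathbb{N}}$ be a sequence of reconstructors and $\Psi^*$ a reconstructor such that $\sup_{y\in\mathcal{Y}^\delta}\|\,|D\Psi_k(y)|-|D\Psi^*(y)|\,\|_1\to0$ as $k\to\infty$, where $\mathcal{Y}^\delta=\{y\in\mathbb{R}^m:\inf_{x\in\mathcal{X}}\|Kx-y\|_2\le\delta\}$. For each $k$ let $x^*_{\Psi_k,\delta}$ be the unique minimizer over $\mathcal{X}$ of $\mathcal{J}_{\Psi_k,\delta}(x)=\|Kx-y^\delta\|_2^2+\lambda\|w(\Psi_k(y^\delta))\odot|Dx|\|_1$, and let $x^*_{\Psi^*,\delta}$ denote the unique minimizer over $\mathcal{X}$ of $\mathcal{J}_{\Psi^*,\delta}(x)=\|Kx-y^\delta\|_2^2+\lambda\|w(\Psi^*(y^\delta))\odot|Dx|\|_1$. Then $\{x^*_{\Psi_k,\delta}\}_{k\in\mathbb{N}}$ has a convergent subsequence whose limit is $x^*_{\Psi^*,\delta}$.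
   Context: Let $K\in\mathbb{R}^{m\times n}$ with $m\le n$, and let $D_h,D_v\in\mathbb{R}^{n\times n}$ be the discrete horizontal and vertical difference operators; $Dx=\begin{bmatrix}D_hx\\ D_vx\end{bmatrix}\in\mathbb{R}^{2n}$, and $|Dx|\in\mathbb{R}^n$, $(|Dx|)_i=\sqrt{(D_hx)_i^2+(D_vx)_i^2}$. $\mathcal{X}=\{x\in\mathbb{R}^n: x_i\ge 0\ \forall i\}$. Fix $\lambda>0$, $\eta>0$, $p\in(0,1)$, and for $\tilde x\in\mathbb{R}^n$ define $(w(\tilde{x}))_i=\big(\eta/\sqrt{\eta^2+(|D\tilde{x}|)_i^2}\big)^{1-p}$. A reconstructor is a Lipschitz continuous map $\Psi:\mathbb{R}^m\to\mathbb{R}^n$. The data is $y^\delta=Kx^{GT}+e$ with $x^{GT}\in\mathcal{X}$ and $\|e\|_2\le\delta$. $\odot$ is the entrywise product. *)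

theory Defs
  imports "HOL-Analysis.Analysis"
begin

definition absD :: "real^'n^'n \<Rightarrow> real^'n^'n \<Rightarrow> real^'n \<Rightarrow> real^'n" where
  "absD Dh Dv x = (\<chi> i. sqrt (((Dh *v x) $ i)\<^sup>2 + ((Dv *v x) $ i)\<^sup>2))"

definition weight :: "real \<Rightarrow> real \<Rightarrow> real^'n^'n \<Rightarrow> real^'n^'n \<Rightarrow> real^'n \<Rightarrow> real^'n" where
  "weight eta p Dh Dv xt =
     (\<chi> i. (eta / sqrt (eta\<^sup>2 + ((absD Dh Dv xt) $ i)\<^sup>2)) powr (1 - p))"

definition norm1 :: "real^'n \<Rightarrow> real" where
  "norm1 v = (\<Sum>i\<in>UNIV. \<bar>v $ i\<bar>)"

definition nonneg_set :: "(real^'n) set" where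
  "nonneg_set = {x. \<forall>i. x $ i \<ge> 0}"

definition reconstructor :: "(real^'m \<Rightarrow> real^'n) \<Rightarrow> bool" where
  "reconstructor Psi \<longleftrightarrow> (\<exists>L. lipschitz_on L UNIV Psi)"

definition Ydelta :: "real^'n^'m \<Rightarrow> real \<Rightarrow> (real^'m) set" where
  "Ydelta K delta = {y. (INF x\<in>nonneg_set. norm (K *v x - y)) \<le> delta}"

definition Jfun :: "real^'n^'m \<Rightarrow> real^'n^'n \<Rightarrow> real^'n^'n \<Rightarrow> real \<Rightarrow> real \<Rightarrow> real
    \<Rightarrow> (real^'m \<Rightarrow> real^'n) \<Rightarrow> real^'m \<Rightarrow> real^'n \<Rightarrow> real" where
  "Jfun K Dh Dv lam eta p Psi ydel x =
     (norm (K *v x - ydel))\<^sup>2 + lam * norm1 (weight eta p Dh Dv (Psi ydel) * absD Dh Dv x)"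

definition unique_minimizer :: "('a \<Rightarrow> real) \<Rightarrow> 'a set \<Rightarrow> 'a \<Rightarrow> bool" where
  "unique_minimizer f S x \<longleftrightarrow> x \<in> S \<and> (\<forall>z\<in>S. f x \<le> f z) \<and>
     (\<forall>z\<in>S. (\<forall>u\<in>S. f z \<le> f u) \<longrightarrow> z = x)"

end

theory Submission
  imports Defs
begin

lemma mv_tendsto [tendsto_intros]:
  fixes M :: "real^'n^'m"
  shows "(f \<longlongrightarrow> a) F \<Longrightarrow> ((\<lambda>k. M *v f k) \<longlongrightarrow> M *v a) F"
  by (rule bounded_linear.tendsto[OF matrix_vector_mul_bounded_linear])

lemma abs_le_sqrt2: "\<bar>a::real\<bar> \<le> sqrt (a\<^sup>2 + b\<^sup>2)"
  by (metis real_sqrt_abs real_sqrt_le_mono add_increasing2 zero_le_power2 order_refl)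

theorem corollary1:
  fixes K :: "real^'n^'m" and Dh Dv :: "real^'n^'n"
    and lam eta p delta :: real
    and xGT :: "real^'n" and e ydel :: "real^'m"
    and Psi :: "nat \<Rightarrow> real^'m \<Rightarrow> real^'n" and PsiStar :: "real^'m \<Rightarrow> real^'n"
    and xk :: "nat \<Rightarrow> real^'n" and xstar :: "real^'n"
  assumes "CARD('m) \<le> CARD('n)"
    and "lam > 0" and "eta > 0" and "0 < p" and "p < 1"
    and ker: "\<forall>x. K *v x = 0 \<and> Dh *v x = 0 \<and> Dv *v x = 0 \<longrightarrow> x = 0"
    and "delta \<ge> 0"
    and "xGT \<in> nonneg_set" and "norm e \<le> delta" and "ydel = K *v xGT + e"
    and "\<And>k. reconstructor (Psi k)" and "reconstructor PsiStar"
    and conv: "\<forall>\<epsilon>>0. \<forall>\<^sub>F k in sequentially. \<forall>y\<in>Ydelta K delta.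
                 norm1 (absD Dh Dv (Psi k y) - absD Dh Dv (PsiStar y)) \<le> \<epsilon>"
    and "\<And>k. unique_minimizer (Jfun K Dh Dv lam eta p (Psi k) ydel) nonneg_set (xk k)"
    and "unique_minimizer (Jfun K Dh Dv lam eta p PsiStar ydel) nonneg_set xstar"
  shows "\<exists>r. strict_mono r \<and> (xk \<circ> r) \<longlonglongrightarrow> xstar"
proof -
  note lam = \<open>lam > 0\<close> and eta = \<open>eta > 0\<close>
  define g where "g t = (eta / sqrt (eta\<^sup>2 + t\<^sup>2)) powr (1 - p)" for t
  define A where "A k = absD Dh Dv (Psi k ydel)" for k
  define As where "As = absD Dh Dv (PsiStar ydel)"
  define W where "W k = weight eta p Dh Dv (Psi k ydel)" for k
  define Ws where "Ws = weight eta p Dh Dv (PsiStar ydel)"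
  define F where "F w x = (norm (K *v x - ydel))\<^sup>2 + lam * norm1 (w * absD Dh Dv x)" for w x
  have Jk: "Jfun K Dh Dv lam eta p (Psi k) ydel = F (W k)" for k
    by (simp add: fun_eq_iff Jfun_def F_def W_def)
  have Js: "Jfun K Dh Dv lam eta p PsiStar ydel = F Ws"
    by (simp add: fun_eq_iff Jfun_def F_def Ws_def)
  have absD_nn: "absD Dh Dv x $ i \<ge> 0" for x i by (simp add: absD_def)
  have Wg: "W k = (\<chi> i. g (A k $ i))" for k by (simp add: W_def weight_def A_def g_def)
  have Wsg: "Ws = (\<chi> i. g (As $ i))" by (simp add: Ws_def weight_def As_def g_def)
  have sq_pos: "sqrt (eta\<^sup>2 + t\<^sup>2) > 0" for t
    using eta by (simp add: add_pos_nonneg)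
  have g_pos: "g t > 0" for t using eta sq_pos[of t] by (simp add: g_def)
  have g_anti: "g B \<le> g t" if "0 \<le> t" "t \<le> B" for t B
  proof -
    have "sqrt (eta\<^sup>2 + t\<^sup>2) \<le> sqrt (eta\<^sup>2 + B\<^sup>2)"
      using that by (simp add: power_mono)
    hence "eta / sqrt (eta\<^sup>2 + B\<^sup>2) \<le> eta / sqrt (eta\<^sup>2 + t\<^sup>2)"
      using eta sq_pos[of t] by (intro divide_left_mono) auto
    thus ?thesis unfolding g_def using \<open>p < 1\<close> eta sq_pos[of B]
      by (intro powr_mono2) auto
  qed
  have ydel_in: "ydel \<in> Ydelta K delta"
  proof -
    have "(INF x\<in>nonneg_set. norm (K *v x - ydel)) \<le> delta"
      by (rule cINF_lower2[where x=xGT]) (use assms in \<open>auto intro: bdd_belowI[where m=0]\<close>)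
    thus ?thesis by (simp add: Ydelta_def)
  qed
  have A_lim: "A \<longlonglongrightarrow> As"
    unfolding tendsto_iff
  proof (intro allI impI)
    fix \<epsilon> :: real assume "\<epsilon> > 0"
    hence "\<forall>\<^sub>F k in sequentially. norm1 (A k - As) \<le> \<epsilon>/2"
      using conv[rule_format, of "\<epsilon>/2"] ydel_in
      by (auto simp: A_def As_def elim!: eventually_mono)
    thus "\<forall>\<^sub>F k in sequentially. dist (A k) As < \<epsilon>"
    proof (rule eventually_mono)
      fix k assume "norm1 (A k - As) \<le> \<epsilon>/2"
      thus "dist (A k) As < \<epsilon>" using norm_le_l1_cart[of "A k - As"] \<open>\<epsilon> > 0\<close>
        by (simp add: dist_norm norm1_def)
    qed
  qed
  have W_lim: "W \<longlonglongrightarrow> Ws"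
    unfolding Wg Wsg g_def
    by (intro tendsto_intros A_lim) (use sq_pos eta in \<open>auto\<close>)
  obtain B where B: "B > 0" "\<And>k. norm (A k) \<le> B"
    using convergent_imp_Bseq[OF convergentI[OF A_lim]] by (auto elim: BseqE)
  define c where "c = g B"
  have c_pos: "c > 0" using g_pos c_def by simp
  have W_ge: "W k $ i \<ge> c" for k i
  proof -
    have "A k $ i \<le> B" using component_le_norm_cart[of "A k" i] B(2)[of k] by simp
    moreover have "A k $ i \<ge> 0" using absD_nn A_def by simp
    ultimately show ?thesis using g_anti c_def Wg by simp
  qed
  have norm1_eq: "norm1 (W k * absD Dh Dv x) = (\<Sum>i\<in>UNIV. W k $ i * absD Dh Dv x $ i)" for k x
  proof -
    have "W k $ i \<ge> 0" for i using W_ge[of k i] c_pos by linarith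
    thus ?thesis unfolding norm1_def using absD_nn
      by (intro sum.cong refl) (simp add: abs_mult)
  qed
  have norm1_nn: "norm1 (v::real^'n) \<ge> 0" for v by (simp add: norm1_def sum_nonneg)
  have absD0: "absD Dh Dv 0 = 0" by (simp add: absD_def vec_eq_iff)
  have zero_in: "(0::real^'n) \<in> nonneg_set" by (simp add: nonneg_set_def)
  have xk_in: "xk k \<in> nonneg_set" for k using assms(14)[of k] by (simp add: unique_minimizer_def)
  have xk_min: "F (W k) (xk k) \<le> F (W k) z" if "z \<in> nonneg_set" for k z
    using assms(14)[of k] that by (simp add: unique_minimizer_def Jk)
  define Y where "Y = (norm ydel)\<^sup>2"
  define M where "M = Y / (lam * c)"
  have bnds: "norm (K *v xk k) \<le> 2 * norm ydel \<and> (\<Sum>i\<in>UNIV. absD Dh Dv (xk k) $ i) \<le> M" for k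
  proof -
    have F0: "F (W k) 0 = Y" by (simp add: F_def absD0 Y_def norm1_def)
    have le: "F (W k) (xk k) \<le> Y" using xk_min[OF zero_in, of k] F0 by simp
    have t2: "lam * norm1 (W k * absD Dh Dv (xk k)) \<ge> 0" using lam norm1_nn
      by (simp add: less_imp_le)
    have "(norm (K *v xk k - ydel))\<^sup>2 \<le> (norm ydel)\<^sup>2" using le t2 unfolding F_def Y_def by linarith
    hence "norm (K *v xk k - ydel) \<le> norm ydel" using power2_le_imp_le by fastforce
    hence n1: "norm (K *v xk k) \<le> 2 * norm ydel"
      using norm_triangle_ineq4[of "K *v xk k - ydel" "- ydel"] norm_triangle_sub[of "K *v xk k" ydel]
      by simp
    have "lam * norm1 (W k * absD Dh Dv (xk k)) \<le> Y" using le zero_le_power2[of "norm (K *v xk k - ydel)"] unfolding F_def by linarith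
    moreover have "c * (\<Sum>i\<in>UNIV. absD Dh Dv (xk k) $ i) \<le> norm1 (W k * absD Dh Dv (xk k))"
      unfolding norm1_eq sum_distrib_left using W_ge absD_nn
      by (intro sum_mono mult_right_mono) auto
    ultimately have "lam * (c * (\<Sum>i\<in>UNIV. absD Dh Dv (xk k) $ i)) \<le> Y"
    proof -
      have "lam * (c * (\<Sum>i\<in>UNIV. absD Dh Dv (xk k) $ i)) \<le> lam * norm1 (W k * absD Dh Dv (xk k))"
        using lam \<open>c * _ \<le> _\<close> by (intro mult_left_mono) auto
      thus ?thesis using \<open>lam * _ \<le> Y\<close> by linarith
    qed
    hence "(\<Sum>i\<in>UNIV. absD Dh Dv (xk k) $ i) \<le> M"
      using lam c_pos unfolding M_def by (simp add: pos_le_divide_eq mult.commute mult.left_commute)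
    thus ?thesis using n1 by simp
  qed
  have Dbnd: "norm (Dh *v xk k) \<le> M" "norm (Dv *v xk k) \<le> M" for k
  proof -
    have "norm (Dh *v xk k) \<le> (\<Sum>i\<in>UNIV. \<bar>(Dh *v xk k) $ i\<bar>)" by (rule norm_le_l1_cart)
    also have "\<dots> \<le> (\<Sum>i\<in>UNIV. absD Dh Dv (xk k) $ i)"
      by (intro sum_mono) (simp add: absD_def abs_le_sqrt2)
    finally show "norm (Dh *v xk k) \<le> M" using bnds[of k] by simp
    have "norm (Dv *v xk k) \<le> (\<Sum>i\<in>UNIV. \<bar>(Dv *v xk k) $ i\<bar>)" by (rule norm_le_l1_cart)
    also have "\<dots> \<le> (\<Sum>i\<in>UNIV. absD Dh Dv (xk k) $ i)"
      by (intro sum_mono) (simp add: absD_def abs_le_sqrt2[of _ "(Dh *v xk k) $ _"] add.commute)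
    finally show "norm (Dv *v xk k) \<le> M" using bnds[of k] by simp
  qed
  define L where "L x = (K *v x, Dh *v x, Dv *v x)" for x
  have bl: "bounded_linear L" unfolding L_def
    by (intro bounded_linear_Pair matrix_vector_mul_bounded_linear)
  obtain eps where eps: "eps > 0" "\<And>x. norm (L x) \<ge> eps * norm x"
  proof -
    have inj: "\<forall>x\<in>UNIV. L x = 0 \<longrightarrow> x = 0" 
    proof (intro ballI impI)
      fix x :: "real^'n" assume "L x = 0"
      hence "K *v x = 0 \<and> Dh *v x = 0 \<and> Dv *v x = 0" by (simp add: L_def zero_prod_def)
      thus "x = 0" using ker by blast
    qed
    from injective_imp_isometric[OF closed_UNIV subspace_UNIV bl inj]
    obtain e0 where "e0 > 0" "\<forall>x\<in>UNIV. norm (L x) \<ge> e0 * norm x" by blast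
    thus ?thesis using that by blast
  qed
  have "bounded (range xk)"
  proof (rule boundedI)
    fix x assume "x \<in> range xk"
    then obtain k where x: "x = xk k" by auto
    have "norm (L x) \<le> norm (K *v x) + (norm (Dh *v x) + norm (Dv *v x))"
    proof -
      have "norm (L x) \<le> norm (K *v x) + norm (Dh *v x, Dv *v x)" unfolding L_def by (rule norm_Pair_le)
      also have "\<dots> \<le> norm (K *v x) + (norm (Dh *v x) + norm (Dv *v x))"
        using norm_Pair_le by (rule add_left_mono)
      finally show ?thesis .
    qed
    also have "\<dots> \<le> 2 * norm ydel + (M + M)" using bnds[of k] Dbnd[of k] x by simp
    finally have "eps * norm x \<le> 2 * norm ydel + (M + M)" using eps(2)[of x] by simp
    thus "norm x \<le> (2 * norm ydel + (M + M)) / eps" using eps(1)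
      by (simp add: pos_le_divide_eq mult.commute)
  qed
  then obtain l r where r: "strict_mono r" and lim: "(xk \<circ> r) \<longlonglongrightarrow> l"
    using bounded_imp_convergent_subsequence by blast
  have l_in: "l \<in> nonneg_set"
    unfolding nonneg_set_def
  proof (intro CollectI allI)
    fix i
    have "((\<lambda>k. (xk \<circ> r) k $ i) \<longlongrightarrow> l $ i) sequentially" by (intro tendsto_intros lim)
    thus "0 \<le> l $ i"
      by (rule tendsto_lowerbound) (use xk_in in \<open>auto simp: nonneg_set_def\<close>)
  qed
  have Wr: "(W \<circ> r) \<longlonglongrightarrow> Ws" using LIMSEQ_subseq_LIMSEQ[OF W_lim r] .
  have Flim: "((\<lambda>k. F ((W \<circ> r) k) (u k)) \<longlongrightarrow> F Ws v) sequentially"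
    if "u \<longlonglongrightarrow> v" for u v
    unfolding F_def norm1_def absD_def vector_mult_component vec_lambda_beta
    by (intro tendsto_intros Wr that)
  have minl: "F Ws l \<le> F Ws z" if "z \<in> nonneg_set" for z
  proof (rule tendsto_le[OF _ Flim[of "\<lambda>_. z" z] Flim[OF lim]])
    show "\<forall>\<^sub>F k in sequentially. F ((W \<circ> r) k) ((xk \<circ> r) k) \<le> F ((W \<circ> r) k) z"
      using xk_min[OF that] by simp
  qed simp_all
  have "l = xstar"
    using assms(15) l_in minl by (simp add: unique_minimizer_def Js)
  thus ?thesis using r lim by blast
qed

end
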